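(* Let $M,N\in\Lambda$. If $\mathrm{BT}(M)=\mathrm{BT}(N)$ then $M\equiv N$.
   Context: Call-by-value $\lambda$-calculus with permutations: $\lambda$-terms and values are $M,N::=V\mid MN$, $V::=x\mid\lambda x.M$, up to $\alpha$-conversion. Rules: $(\beta_v)$ $(\lambda x.M)V\to M\{x:=V\}$ if $V$ is a value; $(\sigma_1)$ $(\lambda x.M)NP\to(\lambda x.MP)N$ if $x\notin\mathrm{FV}(P)$; $(\sigma_3)$ $V((\lambda x.M)N)\to(\lambda x.VM)N$ if $V$ is a value and $x\notin\mathrm{FV}(V)$. $\to_{\beta_v}$ is the contextual closure of $(\beta_v)$ alone, $\to_{\mathsf v}$ the contextual closure of all three rules, $\twoheadrightarrow$ denotes reflexive-transitive closures. Approximants: $\Lambda_\bot$ is the set of $\lambda$-terms possibly containing a constant $\bot$. $\sqsubseteq$ is the smallest context-closed preorder on $\Lambda_\bot$ with $\bot\sqsubseteq x$ and $\bot\sqsubseteq\lambda x.M$. The set $\mathcal A$ of approximants is generated by ($k\ge0$): $A::=B\mid C$; $B::=x\mid\lambda x.A\mid\bot\mid xBA_1\cdots A_k$; $C::=(\lambda x.A)(yBA_1\cdots A_k)$. For $M\in\Lambda$, $\mathcal A(M)=\{A\in\mathcal A\mid\exists N\in\Lambda,\ M\twoheadrightarrow_{\mathsf v}N,\ A\sqsubseteq N\}$, and the Böhm tree $\mathrm{BT}(M)=\bigsqcup\mathcal A(M)$; in particular $\mathrm{BT}(M)=\mathrm{BT}(N)$ iff $\mathcal A(M)=\mathcal A(N)$.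 Observational equivalence: $M\equiv N$ iff for every single-hole context $C[-]$ such that $C[M]$ and $C[N]$ are closed, $C[M]\twoheadrightarrow_{\beta_v}V$ for some value $V$ if and only if $C[N]\twoheadrightarrow_{\beta_v}U$ for some value $U$. *)

theory Defs
  imports Main
begin

section \<open>Lambda terms (de Bruijn indices, so terms are identified up to alpha-conversion)\<close>

datatype trm = Var nat | Lam trm | App trm trm

fun is_value :: "trm \<Rightarrow> bool" where
  "is_value (Var x) = True"
| "is_value (Lam M) = True"
| "is_value (App M N) = False"

fun lift :: "nat \<Rightarrow> trm \<Rightarrow> trm" where
  "lift k (Var i) = (if i < k then Var i else Var (Suc i))"
| "lift k (Lam M) = Lam (lift (Suc k) M)"
| "lift k (App M N) = App (lift k M) (lift k N)"

fun subst :: "trm \<Rightarrow> nat \<Rightarrow> trm \<Rightarrow> trm" where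
  "subst (Var i) k s = (if i < k then Var i else if i = k then s else Var (i - 1))"
| "subst (Lam M) k s = Lam (subst M (Suc k) (lift 0 s))"
| "subst (App M N) k s = App (subst M k s) (subst N k s)"

fun closed_at :: "nat \<Rightarrow> trm \<Rightarrow> bool" where
  "closed_at k (Var i) = (i < k)"
| "closed_at k (Lam M) = closed_at (Suc k) M"
| "closed_at k (App M N) = (closed_at k M \<and> closed_at k N)"

definition closed :: "trm \<Rightarrow> bool" where
  "closed M \<longleftrightarrow> closed_at 0 M"

text \<open>Root rules. The side conditions \<open>x \<notin> FV(P)\<close>, \<open>x \<notin> FV(V)\<close> correspond to lifting
  \<open>P\<close> / \<open>V\<close> when moved under the binder.\<close>
inductive beta_v_rule :: "trm \<Rightarrow> trm \<Rightarrow> bool" where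
  "is_value V \<Longrightarrow> beta_v_rule (App (Lam M) V) (subst M 0 V)"

inductive v_rule :: "trm \<Rightarrow> trm \<Rightarrow> bool" where
  beta_v: "is_value V \<Longrightarrow> v_rule (App (Lam M) V) (subst M 0 V)"
| sigma1: "v_rule (App (App (Lam M) N) P) (App (Lam (App M (lift 0 P))) N)"
| sigma3: "is_value V \<Longrightarrow> v_rule (App V (App (Lam M) N)) (App (Lam (App (lift 0 V) M)) N)"

inductive ctx_closure :: "(trm \<Rightarrow> trm \<Rightarrow> bool) \<Rightarrow> trm \<Rightarrow> trm \<Rightarrow> bool" for R where
  root: "R M N \<Longrightarrow> ctx_closure R M N"
| lam: "ctx_closure R M N \<Longrightarrow> ctx_closure R (Lam M) (Lam N)"
| appL: "ctx_closure R M N \<Longrightarrow> ctx_closure R (App M P) (App N P)"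
| appR: "ctx_closure R M N \<Longrightarrow> ctx_closure R (App P M) (App P N)"

definition step_beta_v :: "trm \<Rightarrow> trm \<Rightarrow> bool" where
  "step_beta_v = ctx_closure beta_v_rule"

definition step_v :: "trm \<Rightarrow> trm \<Rightarrow> bool" where
  "step_v = ctx_closure v_rule"

abbreviation red_beta_v :: "trm \<Rightarrow> trm \<Rightarrow> bool" where
  "red_beta_v \<equiv> step_beta_v\<^sup>*\<^sup>*"

abbreviation red_v :: "trm \<Rightarrow> trm \<Rightarrow> bool" where
  "red_v \<equiv> step_v\<^sup>*\<^sup>*"

datatype btrm = BVar nat | BLam btrm | BApp btrm btrm | Bot

fun embed :: "trm \<Rightarrow> btrm" where
  "embed (Var x) = BVar x"
| "embed (Lam M) = BLam (embed M)"
| "embed (App M N) = BApp (embed M) (embed N)"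

inductive below :: "btrm \<Rightarrow> btrm \<Rightarrow> bool" where
  bot_var: "below Bot (BVar x)"
| bot_lam: "below Bot (BLam M)"
| refl: "below M M"
| trans: "below M N \<Longrightarrow> below N P \<Longrightarrow> below M P"
| lam: "below M N \<Longrightarrow> below (BLam M) (BLam N)"
| appL: "below M N \<Longrightarrow> below (BApp M P) (BApp N P)"
| appR: "below M N \<Longrightarrow> below (BApp P M) (BApp P N)"

text \<open>Grammar of approximants: \<open>apxA\<close> = A, \<open>apxB\<close> = B, \<open>apxH\<close> = terms of the form
  \<open>x B A\<^sub>1 \<dots> A\<^sub>k\<close> (k \<ge> 0).\<close>
inductive apxA :: "btrm \<Rightarrow> bool" and apxB :: "btrm \<Rightarrow> bool" and apxH :: "btrm \<Rightarrow> bool" where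
  A_B: "apxB t \<Longrightarrow> apxA t"
| A_C: "apxA A \<Longrightarrow> apxH t \<Longrightarrow> apxA (BApp (BLam A) t)"
| B_var: "apxB (BVar x)"
| B_lam: "apxA A \<Longrightarrow> apxB (BLam A)"
| B_bot: "apxB Bot"
| B_head: "apxH t \<Longrightarrow> apxB t"
| H_base: "apxB B \<Longrightarrow> apxH (BApp (BVar x) B)"
| H_app: "apxH t \<Longrightarrow> apxA A \<Longrightarrow> apxH (BApp t A)"

definition approximants :: "trm \<Rightarrow> btrm set" where
  "approximants M = {A. apxA A \<and> (\<exists>N. red_v M N \<and> below A (embed N))}"

text \<open>The Boehm tree is the lub of the approximants; it is determined by (and determines)
  the set of approximants, so we represent it by that set.\<close>
definition BT :: "trm \<Rightarrow> btrm set" where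
  "BT M = approximants M"

datatype ctx = Hole | CLam ctx | CAppL ctx trm | CAppR trm ctx

fun plug :: "ctx \<Rightarrow> trm \<Rightarrow> trm" where
  "plug Hole M = M"
| "plug (CLam C) M = Lam (plug C M)"
| "plug (CAppL C P) M = App (plug C M) P"
| "plug (CAppR P C) M = App P (plug C M)"

definition obs_equiv :: "trm \<Rightarrow> trm \<Rightarrow> bool" where
  "obs_equiv M N \<longleftrightarrow> (\<forall>C. closed (plug C M) \<and> closed (plug C N) \<longrightarrow>
     ((\<exists>V. is_value V \<and> red_beta_v (plug C M) V) \<longleftrightarrow> (\<exists>U. is_value U \<and> red_beta_v (plug C N) U)))"

end

theory Submission
  imports Defs "HOL-Library.Multiset" "HOL-Library.Function_Algebras"
begin

datatype ty = Arr "ty multiset" "ty multiset"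

type_synonym tym = "ty multiset"
type_synonym cx = "nat \<Rightarrow> tym"

definition ins :: "nat \<Rightarrow> tym \<Rightarrow> cx \<Rightarrow> cx" where
  "ins k s G = (\<lambda>i. if i < k then G i else if i = k then s else G (i - 1))"

definition del :: "nat \<Rightarrow> cx \<Rightarrow> cx" where
  "del k G = (\<lambda>i. if i < k then G i else G (Suc i))"

datatype prem = Prem (ps: tym) (pG: cx) (pt: tym) (pn: nat)

definition arr :: "prem \<Rightarrow> ty" where "arr p = Arr (ps p) (pt p)"

lemma arr_eta: "arr = (\<lambda>p. Arr (ps p) (pt p))" by (rule ext) (simp add: arr_def)

inductive tj :: "cx \<Rightarrow> trm \<Rightarrow> tym \<Rightarrow> nat \<Rightarrow> bool" where
  TVar: "tj (0(x := s)) (Var x) s 0"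
| TLam: "(\<forall>p. p \<in># P \<longrightarrow> tj (ins 0 (ps p) (pG p)) M (pt p) (pn p)) \<Longrightarrow>
    tj (sum_mset (image_mset pG P)) (Lam M) (image_mset arr P) (sum_mset (image_mset pn P))"
| TApp: "tj G M {#Arr s t#} n \<Longrightarrow> tj D N s m \<Longrightarrow> tj (G + D) (App M N) t (Suc (n + m))"

inductive_cases tj_VarE: "tj G (Var x) t n"
inductive_cases tj_LamE: "tj G (Lam M) t n"
inductive_cases tj_AppE: "tj G (App M N) t n"

lemma ins_add: "ins k (s1 + s2) (G1 + G2) = ins k s1 G1 + ins k s2 G2"
  by (auto simp: ins_def fun_eq_iff)

lemma ins_zero[simp]: "ins k {#} 0 = 0"
  by (auto simp: ins_def fun_eq_iff)

lemma del_add: "del k (G1 + G2) = del k G1 + del k G2"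
  by (auto simp: del_def fun_eq_iff)

lemma ins_del: "G k = s \<Longrightarrow> ins k s (del k G) = G"
  by (auto simp: ins_def del_def fun_eq_iff)

lemma del_ins[simp]: "del k (ins k s G) = G"
  by (auto simp: ins_def del_def fun_eq_iff)

lemma ins_at[simp]: "ins k s G k = s"
  by (auto simp: ins_def)

lemma ins0_Suc[simp]: "ins 0 s G (Suc i) = G i"
  by (simp add: ins_def)

lemma ins_eq_iff: "ins k s G = ins k s' G' \<longleftrightarrow> s = s' \<and> G = G'"
  by (metis del_ins ins_at)

lemma ins_comm: "ins (Suc k) s (ins 0 r G) = ins 0 r (ins k s G)"
  by (auto simp: ins_def fun_eq_iff nat.case split: nat.splits)

lemma del_comm: "del (Suc k) (ins 0 r G) = ins 0 r (del k G)"
  by (auto simp: ins_def del_def fun_eq_iff)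

lemma zero_ctx_add: "(G::cx) + D = 0 \<longleftrightarrow> G = 0 \<and> D = 0"
  by (auto simp: fun_eq_iff)

lemma plus_fun_fold[simp]: "(\<lambda>a. (f::cx) a + g a) = f + g"
  by (simp add: fun_eq_iff)

lemma lam_zero[simp]: "(\<lambda>a::nat. ({#}::tym)) = 0"
  by (simp add: fun_eq_iff)

lemma upd_zero_empty[simp]: "(0::cx)(x := {#}) = 0"
  by (simp add: fun_eq_iff)

lemma tj_value_empty: "is_value V \<Longrightarrow> tj 0 V {#} 0"
proof (cases V)
  case (Var x)
  then show ?thesis using TVar[of x "{#}"] by simp
next
  case (Lam M)
  then show ?thesis using TLam[of "{#}" M] by simp
qed auto

lemma sum_ctx_app: "(sum_mset (image_mset f P) :: cx) i = sum_mset (image_mset (\<lambda>p. f p i) P)"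
  by (induction P) auto

lemma ins_sum: "ins k {#} (sum_mset (image_mset f P)) = sum_mset (image_mset (\<lambda>p. ins k {#} (f p)) P)"
  by (auto simp: fun_eq_iff ins_def sum_ctx_app)

lemma del_sum: "del k (sum_mset (image_mset f P)) = sum_mset (image_mset (\<lambda>p. del k (f p)) P)"
  by (auto simp: fun_eq_iff del_def sum_ctx_app)

lemma tj_value_emptyD: "is_value V \<Longrightarrow> tj D V {#} m \<Longrightarrow> D = 0 \<and> m = 0"
  by (cases V) (auto elim!: tj_VarE tj_LamE)

lemma lam_merge: "tj G1 (Lam M) t1 n1 \<Longrightarrow> tj G2 (Lam M) t2 n2 \<Longrightarrow> tj (G1 + G2) (Lam M) (t1 + t2) (n1 + n2)"
proof (elim tj_LamE)
  fix P1 P2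
  assume "\<forall>p. p \<in># P1 \<longrightarrow> tj (ins 0 (ps p) (pG p)) M (pt p) (pn p)"
    "\<forall>p. p \<in># P2 \<longrightarrow> tj (ins 0 (ps p) (pG p)) M (pt p) (pn p)"
    "G1 = sum_mset (image_mset pG P1)" "t1 = image_mset arr P1" "n1 = sum_mset (image_mset pn P1)"
    "G2 = sum_mset (image_mset pG P2)" "t2 = image_mset arr P2" "n2 = sum_mset (image_mset pn P2)"
  then show ?thesis using TLam[of "P1 + P2" M] by auto
qed

lemma value_merge: assumes "is_value V" "tj G1 V t1 n1" "tj G2 V t2 n2" shows "tj (G1 + G2) V (t1 + t2) (n1 + n2)"
proof (cases V)
  case (Var x)
  from assms have "G1 = 0(x := t1)" "G2 = 0(x:=t2)" "n1 = 0" "n2 = 0" using Var by (auto elim: tj_VarE)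
  moreover have "(0::cx)(x := t1) + 0(x := t2) = 0(x := t1 + t2)" by (auto simp: fun_eq_iff)
  ultimately show ?thesis using Var TVar[of x "t1 + t2"] by simp
next
  case (Lam M)
  then show ?thesis using lam_merge assms by metis
next
  case App with assms show ?thesis by simp
qed

lemma value_split: assumes "is_value V" "tj D V (t1 + t2) m" shows
   "\<exists>D1 D2 m1 m2. D = D1 + D2 \<and> m = m1 + m2 \<and> tj D1 V t1 m1 \<and> tj D2 V t2 m2"
proof (cases V)
  case (Var x)
  from assms have "D = 0(x := t1 + t2)" "m = 0" using Var by (auto elim: tj_VarE)
  moreover have "(0::cx)(x := t1) + 0(x := t2) = 0(x := t1 + t2)" by (auto simp: fun_eq_iff)
  ultimately show ?thesis using Var TVar[of x] by (metis add_0)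
next
  case (Lam M)
  from assms obtain P where P: "\<forall>p. p \<in># P \<longrightarrow> tj (ins 0 (ps p) (pG p)) M (pt p) (pn p)"
    "D = sum_mset (image_mset pG P)" "t1 + t2 = image_mset arr P" "m = sum_mset (image_mset pn P)"
    using Lam by (auto elim: tj_LamE)
  then obtain P1 P2 where "P = P1 + P2" "t1 = image_mset arr P1" "t2 = image_mset arr P2"
    using image_mset_eq_plusD[of arr P t1 t2] by metis
  then show ?thesis using P Lam TLam[of P1 M] TLam[of P2 M] by auto
next
  case App with assms show ?thesis by simp
qed

lemma lift_var: "lift k (Var i) = Var (if i < k then i else Suc i)" by simp

lemma tj_lift: "tj G M t n \<Longrightarrow> tj (ins k {#} G) (lift k M) t n"
proof (induction arbitrary: k rule: tj.induct)
  case (TVar x s)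
  have "ins k {#} (0(x := s)) = 0((if x < k then x else Suc x) := s)"
    by (auto simp: ins_def fun_eq_iff)
  moreover have "lift k (Var x) = Var (if x < k then x else Suc x)" by simp
  ultimately show ?case by (metis tj.TVar)
next
  case (TLam P M)
  let ?P = "image_mset (\<lambda>p. Prem (ps p) (ins k {#} (pG p)) (pt p) (pn p)) P"
  have "\<forall>p. p \<in># ?P \<longrightarrow> tj (ins 0 (ps p) (pG p)) (lift (Suc k) M) (pt p) (pn p)"
    using TLam by (auto simp: ins_comm[symmetric])
  from tj.TLam[OF this] show ?case
    by (simp add: ins_sum image_mset.compositionality comp_def arr_eta)
next
  case (TApp G M s t n D N m)
  then show ?case using tj.TApp ins_add[of k "{#}" "{#}"] by fastforce
qed

lemma tj_unlift: "tj T (lift k M) t n \<Longrightarrow> T k = {#} \<and> tj (del k T) M t n"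
proof (induction M arbitrary: k T t n)
  case (Var i)
  then have "tj T (Var (if i < k then i else Suc i)) t n" by (cases "i < k") auto
  then have T: "T = 0((if i < k then i else Suc i) := t)" and n0: "n = 0" by (auto elim: tj_VarE)
  have d: "del k (0((if i < k then i else Suc i) := t)) = 0(i := t)"
    by (auto simp: del_def fun_eq_iff)
  have "T k = {#}" unfolding T by auto
  moreover have "tj (del k T) (Var i) t n" unfolding T d n0 by (rule TVar)
  ultimately show ?case by blast
next
  case (Lam M)
  then obtain P where P: "\<forall>p. p \<in># P \<longrightarrow> tj (ins 0 (ps p) (pG p)) (lift (Suc k) M) (pt p) (pn p)"
    "T = sum_mset (image_mset pG P)" "t = image_mset arr P" "n = sum_mset (image_mset pn P)"
    by (auto elim: tj_LamE)
  have h: "p \<in># P \<Longrightarrow> pG p k = {#} \<and> tj (ins 0 (ps p) (del k (pG p))) M (pt p) (pn p)" for p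
  proof -
    assume "p \<in># P"
    then have "tj (ins 0 (ps p) (pG p)) (lift (Suc k) M) (pt p) (pn p)" using P(1) by blast
    from Lam.IH[OF this] show ?thesis by (simp only: del_comm ins0_Suc)
  qed
  let ?P = "image_mset (\<lambda>p. Prem (ps p) (del k (pG p)) (pt p) (pn p)) P"
  have "\<forall>p. p \<in># ?P \<longrightarrow> tj (ins 0 (ps p) (pG p)) M (pt p) (pn p)" using h by auto
  from TLam[OF this] have "tj (del k T) (Lam M) t n"
    using P by (simp add: del_sum image_mset.compositionality comp_def arr_eta)
  moreover have "T k = {#}" using P(2) h by (simp add: sum_ctx_app)
  ultimately show ?case by simp
next
  case (App M1 M2)
  then obtain G D s n1 n2 where "T = G + D" "tj G (lift k M1) {#Arr s t#} n1" "tj D (lift k M2) s n2"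
    "n = Suc (n1 + n2)" by (auto elim: tj_AppE)
  then show ?case using App.IH TApp by (fastforce simp: del_add)
qed

lemma is_value_lift[simp]: "is_value (lift k V) = is_value V"
  by (cases V) auto

lemma single_lam: "tj (ins 0 a G) N b n \<Longrightarrow> tj G (Lam N) {#Arr a b#} n"
  using TLam[of "{#Prem a G b n#}" N] by (simp add: arr_def)

lemma lam_subst_aux:
  assumes val: "is_value s"
  and H: "\<forall>p. p \<in># P \<longrightarrow> (\<forall>Dp mp. tj Dp s (pG p k) mp \<longrightarrow> tj (ins 0 (ps p) (del k (pG p) + Dp)) N (pt p) (pn p + mp))"
  shows "tj D s (sum_mset (image_mset (\<lambda>p. pG p k) P)) m \<Longrightarrow>
    tj (sum_mset (image_mset (\<lambda>p. del k (pG p)) P) + D) (Lam N) (image_mset arr P) (sum_mset (image_mset pn P) + m)"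
  using H
proof (induction P arbitrary: D m)
  case empty
  then have "D = 0" "m = 0" using tj_value_emptyD val by auto
  then show ?case using TLam[of "{#}" N] by simp
next
  case (add p P)
  have "tj D s (pG p k + sum_mset (image_mset (\<lambda>p. pG p k) P)) m" using add.prems(1) by simp
  from value_split[OF val this] obtain D1 D2 m1 m2 where
    sp: "D = D1 + D2" "m = m1 + m2" "tj D1 s (pG p k) m1" "tj D2 s (sum_mset (image_mset (\<lambda>p. pG p k) P)) m2"
    by blast
  have HP: "\<forall>p. p \<in># P \<longrightarrow> (\<forall>Dp mp. tj Dp s (pG p k) mp \<longrightarrow> tj (ins 0 (ps p) (del k (pG p) + Dp)) N (pt p) (pn p + mp))"
    by (intro allI impI, rule add.prems(2)[rule_format], simp)
  have r: "tj (sum_mset (image_mset (\<lambda>p. del k (pG p)) P) + D2) (Lam N) (image_mset arr P) (sum_mset (image_mset pn P) + m2)"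
    by (rule add.IH[OF sp(4) HP])
  have "tj (ins 0 (ps p) (del k (pG p) + D1)) N (pt p) (pn p + m1)" using add.prems(2) sp(3) by simp
  then have "tj (del k (pG p) + D1) (Lam N) {#arr p#} (pn p + m1)" using single_lam arr_def by metis
  from lam_merge[OF this r] have "tj (del k (pG p) + D1 + (sum_mset (image_mset (\<lambda>p. del k (pG p)) P) + D2)) (Lam N)
     ({#arr p#} + image_mset arr P) (pn p + m1 + (sum_mset (image_mset pn P) + m2))" .
  moreover have "del k (pG p) + D1 + (sum_mset (image_mset (\<lambda>p. del k (pG p)) P) + D2) =
     sum_mset (image_mset (\<lambda>p. del k (pG p)) (add_mset p P)) + D"
    using sp(1) by (simp add: add_ac)
  moreover have "pn p + m1 + (sum_mset (image_mset pn P) + m2) = sum_mset (image_mset pn (add_mset p P)) + m"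
    using sp(2) by simp
  moreover have "({#arr p#} + image_mset arr P) = image_mset arr (add_mset p P)" by simp
  ultimately show ?case by metis
qed

lemma tj_subst:
  assumes "is_value s"
  shows "tj (ins k \<sigma> G) M t n \<Longrightarrow> tj D s \<sigma> m \<Longrightarrow> tj (G + D) (subst M k s) t (n + m)"
  using assms
proof (induction M arbitrary: k \<sigma> G t n s D m)
  case (Var i)
  from Var.prems(1) have E: "ins k \<sigma> G = 0(i := t)" "n = 0" by (auto elim: tj_VarE)
  have Gd: "G = del k (0(i := t))" "\<sigma> = (0(i := t)) k" using E by (metis del_ins, metis ins_at)
  consider "i < k" | "i = k" | "i > k" by linarith
  then show ?case
  proof cases
    case 1
    then have "\<sigma> = {#}" and GG: "G = 0(i := t)" using Gd by (auto simp: del_def fun_eq_iff)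
    then have D0: "D = 0" and m0: "m = 0" using tj_value_emptyD Var.prems by auto
    have "subst (Var i) k s = Var i" using 1 by simp
    then show ?thesis unfolding GG D0 m0 E(2) by (simp only: add_0_right add_0) (rule TVar)
  next
    case 2
    then have "\<sigma> = t" "G = 0" using Gd by (auto simp: del_def fun_eq_iff)
    then show ?thesis using 2 E Var.prems by simp
  next
    case 3
    then have "\<sigma> = {#}" and GG: "G = 0(i - 1 := t)" using Gd by (auto simp: del_def fun_eq_iff)
    then have D0: "D = 0" and m0: "m = 0" using tj_value_emptyD Var.prems by auto
    have "subst (Var i) k s = Var (i - 1)" using 3 by simp
    then show ?thesis unfolding GG D0 m0 E(2) by (simp only: add_0_right add_0) (rule TVar)
  qed
next
  case (Lam M)
  from Lam.prems(1) obtain P where P: "\<forall>p. p \<in># P \<longrightarrow> tj (ins 0 (ps p) (pG p)) M (pt p) (pn p)"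
    "ins k \<sigma> G = sum_mset (image_mset pG P)" "t = image_mset arr P" "n = sum_mset (image_mset pn P)"
    by (auto elim: tj_LamE)
  have H: "\<forall>p. p \<in># P \<longrightarrow> (\<forall>Dp mp. tj Dp s (pG p k) mp \<longrightarrow>
      tj (ins 0 (ps p) (del k (pG p) + Dp)) (subst M (Suc k) (lift 0 s)) (pt p) (pn p + mp))"
  proof (intro allI impI)
    fix p Dp mp assume p: "p \<in># P" and D: "tj Dp s (pG p k) mp"
    have "ins 0 (ps p) (pG p) = ins (Suc k) (pG p k) (ins 0 (ps p) (del k (pG p)))"
      by (simp add: ins_comm ins_del)
    then have "tj (ins (Suc k) (pG p k) (ins 0 (ps p) (del k (pG p)))) M (pt p) (pn p)" using P(1) p by metis
    from Lam.IH[OF this tj_lift[OF D, of 0]] Lam.prems(3)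
    show "tj (ins 0 (ps p) (del k (pG p) + Dp)) (subst M (Suc k) (lift 0 s)) (pt p) (pn p + mp)"
      by (simp add: ins_add[symmetric])
  qed
  have G: "G = sum_mset (image_mset (\<lambda>p. del k (pG p)) P)" using P(2) by (metis del_ins del_sum)
  have s: "\<sigma> = sum_mset (image_mset (\<lambda>p. pG p k) P)" using P(2) by (metis ins_at sum_ctx_app)
  from lam_subst_aux[OF Lam.prems(3) H, of D m] Lam.prems(2) G s P(3,4) show ?case
    by (metis subst.simps(2))
next
  case (App M1 M2)
  from App.prems(1) obtain G1 G2 a n1 n2 where A: "ins k \<sigma> G = G1 + G2" "tj G1 M1 {#Arr a t#} n1"
    "tj G2 M2 a n2" "n = Suc (n1 + n2)" by (auto elim: tj_AppE)
  have s: "\<sigma> = G1 k + G2 k" using A(1) by (metis ins_at plus_fun_apply)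
  have G: "G = del k G1 + del k G2" using A(1) by (metis del_ins del_add)
  have "tj D s (G1 k + G2 k) m" using App.prems(2) s by simp
  from value_split[OF App.prems(3) this] obtain D1 D2 m1 m2 where
    sp: "D = D1 + D2" "m = m1 + m2" "tj D1 s (G1 k) m1" "tj D2 s (G2 k) m2" by blast
  have 1: "tj (del k G1 + D1) (subst M1 k s) {#Arr a t#} (n1 + m1)"
    using App.IH(1)[of k "G1 k" "del k G1", OF _ sp(3) App.prems(3)] A(2) by (simp add: ins_del)
  have 2: "tj (del k G2 + D2) (subst M2 k s) a (n2 + m2)"
    using App.IH(2)[of k "G2 k" "del k G2", OF _ sp(4) App.prems(3)] A(3) by (simp add: ins_del)
  have ce: "del k G1 + D1 + (del k G2 + D2) = G + D" using G sp by (simp add: fun_eq_iff add_ac)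
  have se: "Suc (n1 + m1 + (n2 + m2)) = n + m" using A(4) sp by simp
  have "tj (G + D) (App (subst M1 k s) (subst M2 k s)) t (n + m)" using TApp[OF 1 2] ce se by metis
  then show ?case by (simp only: subst.simps)
qed

lemma lam_antisubst_aux:
  assumes val: "is_value s"
  and H: "\<forall>p. p \<in># P \<longrightarrow> (\<exists>G1 D \<rho> n1 m. pG p = G1 + D \<and> tj (ins 0 (ps p) (ins k \<rho> G1)) M (pt p) n1 \<and> tj D s \<rho> m)"
  shows "\<exists>G1 D \<sigma> n1 m. sum_mset (image_mset pG P) = G1 + D \<and> tj (ins k \<sigma> G1) (Lam M) (image_mset arr P) n1 \<and> tj D s \<sigma> m"
  using H
proof (induction P)
  case empty
  have "tj (ins k {#} 0) (Lam M) (image_mset arr {#}) 0" using TLam[of "{#}" M] by simp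
  then show ?case using tj_value_empty[OF val] by force
next
  case (add p P)
  from add.prems obtain G1 D \<rho> n1 m where p: "pG p = G1 + D" "tj (ins 0 (ps p) (ins k \<rho> G1)) M (pt p) n1" "tj D s \<rho> m"
    by auto
  from add.IH add.prems obtain G1' D' \<sigma>' n1' m' where r: "sum_mset (image_mset pG P) = G1' + D'"
    "tj (ins k \<sigma>' G1') (Lam M) (image_mset arr P) n1'" "tj D' s \<sigma>' m'" by auto
  have "tj (ins k \<rho> G1) (Lam M) {#arr p#} n1" using single_lam[OF p(2)] by (simp add: arr_def)
  from lam_merge[OF this r(2)] have 1: "tj (ins k (\<rho> + \<sigma>') (G1 + G1')) (Lam M) (image_mset arr (add_mset p P)) (n1 + n1')"
    by (simp add: ins_add)
  from value_merge[OF val p(3) r(3)] have 2: "tj (D + D') s (\<rho> + \<sigma>') (m + m')" .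
  have 3: "sum_mset (image_mset pG (add_mset p P)) = (G1 + G1') + (D + D')" using p(1) r(1) by (simp add: add_ac)
  from 1 2 3 show ?case by blast
qed

lemma tj_antisubst:
  assumes "is_value s"
  shows "tj G (subst M k s) t n \<Longrightarrow> \<exists>G1 D \<sigma> n1 m. G = G1 + D \<and> tj (ins k \<sigma> G1) M t n1 \<and> tj D s \<sigma> m"
  using assms
proof (induction M arbitrary: k G t n s)
  case (Var i)
  consider "i < k" | "i = k" | "i > k" by linarith
  then show ?case
  proof cases
    case 1
    then have "tj G (Var i) t n" using Var by simp
    then have GG: "G = 0(i := t)" by (auto elim: tj_VarE)
    have "ins k {#} G = 0(i := t)" using 1 GG by (auto simp: ins_def fun_eq_iff)
    then show ?thesis using TVar[of i t] tj_value_empty[OF Var.prems(2)]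
      by (metis add.right_neutral)
  next
    case 2
    then have "tj G s t n" using Var by simp
    moreover have "ins k t 0 = 0(i := t)" using 2 by (auto simp: ins_def fun_eq_iff)
    ultimately show ?thesis using TVar[of i t]
      by (metis add_0)
  next
    case 3
    then have "tj G (Var (i - 1)) t n" using Var by simp
    then have GG: "G = 0(i - 1 := t)" by (auto elim: tj_VarE)
    have "ins k {#} G = 0(i := t)" using 3 GG by (auto simp: ins_def fun_eq_iff)
    then show ?thesis using TVar[of i t] tj_value_empty[OF Var.prems(2)]
      by (metis add.right_neutral)
  qed
next
  case (Lam M)
  from Lam.prems(1) obtain P where P: "\<forall>p. p \<in># P \<longrightarrow> tj (ins 0 (ps p) (pG p)) (subst M (Suc k) (lift 0 s)) (pt p) (pn p)"
    "G = sum_mset (image_mset pG P)" "t = image_mset arr P" "n = sum_mset (image_mset pn P)"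
    by (auto elim: tj_LamE)
  have "\<forall>p. p \<in># P \<longrightarrow> (\<exists>G1 D \<rho> n1 m. pG p = G1 + D \<and> tj (ins 0 (ps p) (ins k \<rho> G1)) M (pt p) n1 \<and> tj D s \<rho> m)"
  proof (intro allI impI)
    fix p assume p: "p \<in># P"
    from Lam.IH[OF P(1)[rule_format, OF p]] Lam.prems(2) obtain T1 T2 \<rho> n1 m where
      T: "ins 0 (ps p) (pG p) = T1 + T2" "tj (ins (Suc k) \<rho> T1) M (pt p) n1" "tj T2 (lift 0 s) \<rho> m"
      by auto
    from tj_unlift[OF T(3)] have T2: "T2 0 = {#}" "tj (del 0 T2) s \<rho> m" by auto
    have "T1 0 = ps p" using T(1) T2(1) by (metis add.right_neutral ins_at plus_fun_apply)
    then have T1: "T1 = ins 0 (ps p) (del 0 T1)" by (simp add: ins_del)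
    have "pG p = del 0 T1 + del 0 T2" using T(1) by (metis del_add del_ins)
    moreover have "tj (ins 0 (ps p) (ins k \<rho> (del 0 T1))) M (pt p) n1"
      using T(2) T1 by (metis ins_comm)
    ultimately show "\<exists>G1 D \<rho> n1 m. pG p = G1 + D \<and> tj (ins 0 (ps p) (ins k \<rho> G1)) M (pt p) n1 \<and> tj D s \<rho> m"
      using T2(2) by blast
  qed
  from lam_antisubst_aux[OF Lam.prems(2) this] show ?case using P by auto
next
  case (App M1 M2)
  from App.prems(1) obtain G1 G2 a n1 n2 where A: "G = G1 + G2" "tj G1 (subst M1 k s) {#Arr a t#} n1"
    "tj G2 (subst M2 k s) a n2" by (auto elim: tj_AppE)
  from App.IH(1)[OF A(2) App.prems(2)] obtain H1 D1 s1 x1 y1 where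
    1: "G1 = H1 + D1" "tj (ins k s1 H1) M1 {#Arr a t#} x1" "tj D1 s s1 y1" by auto
  from App.IH(2)[OF A(3) App.prems(2)] obtain H2 D2 s2 x2 y2 where
    2: "G2 = H2 + D2" "tj (ins k s2 H2) M2 a x2" "tj D2 s s2 y2" by auto
  from TApp[OF 1(2) 2(2)] value_merge[OF App.prems(2) 1(3) 2(3)] show ?case
    using A(1) 1(1) 2(1) by (intro exI[of _ "H1 + H2"] exI[of _ "D1 + D2"] exI[of _ "s1 + s2"]) (auto simp: ins_add add_ac)
qed

lemma lam_single_inv: "tj G (Lam M) {#Arr a b#} n \<Longrightarrow> tj (ins 0 a G) M b n"
proof (elim tj_LamE)
  fix P assume P: "\<forall>p. p \<in># P \<longrightarrow> tj (ins 0 (ps p) (pG p)) M (pt p) (pn p)"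
    "G = sum_mset (image_mset pG P)" "{#Arr a b#} = image_mset arr P" "n = sum_mset (image_mset pn P)"
  then have "size P = 1" by (metis size_image_mset size_single)
  then obtain p where p: "P = {#p#}" using size_1_singleton_mset by blast
  then have "ps p = a" "pt p = b" using P(3) by (auto simp: arr_def)
  then show ?thesis using P p by auto
qed

lemma beta_sr: "tj G (App (Lam M) V) t n \<Longrightarrow> is_value V \<Longrightarrow> \<exists>n'<n. tj G (subst M 0 V) t n'"
  by (elim tj_AppE) (metis add_less_mono1 lam_single_inv lessI tj_subst)

lemma beta_se: "tj G (subst M 0 V) t n \<Longrightarrow> is_value V \<Longrightarrow> \<exists>n'. tj G (App (Lam M) V) t n'"
  by (drule tj_antisubst) (auto intro: TApp single_lam)

lemma sigma1_sr: "tj G (App (App (Lam M) N) P) t n \<Longrightarrow> tj G (App (Lam (App M (lift 0 P))) N) t n"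
proof (elim tj_AppE)
  fix Ga Gp r na np Gl Gn a nl nn
  assume A: "G = Ga + Gp" "tj Gp P r np" "n = Suc (na + np)" "Ga = Gl + Gn"
    "tj Gl (Lam M) {#Arr a {#Arr r t#}#} nl" "tj Gn N a nn" "na = Suc (nl + nn)"
  from lam_single_inv[OF A(5)] have 1: "tj (ins 0 a Gl) M {#Arr r t#} nl" .
  from tj_lift[OF A(2), of 0] have 2: "tj (ins 0 {#} Gp) (lift 0 P) r np" .
  from TApp[OF 1 2] have "tj (ins 0 a (Gl + Gp)) (App M (lift 0 P)) t (Suc (nl + np))"
    by (simp add: ins_add[symmetric])
  from TApp[OF single_lam[OF this] A(6)] show ?thesis using A by (simp add: add_ac)
qed

lemma sigma1_se: "tj G (App (Lam (App M (lift 0 P))) N) t n \<Longrightarrow> tj G (App (App (Lam M) N) P) t n"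
proof (elim tj_AppE)
  fix Gl Gn a nl nn
  assume A: "G = Gl + Gn" "tj Gl (Lam (App M (lift 0 P))) {#Arr a t#} nl" "tj Gn N a nn" "n = Suc (nl + nn)"
  from lam_single_inv[OF A(2)] obtain T1 T2 r x y where B: "ins 0 a Gl = T1 + T2" "tj T1 M {#Arr r t#} x"
    "tj T2 (lift 0 P) r y" "nl = Suc (x + y)" by (auto elim: tj_AppE)
  from tj_unlift[OF B(3)] have T2: "T2 0 = {#}" "tj (del 0 T2) P r y" by auto
  have "T1 0 = a" using B(1) T2(1) by (metis add.right_neutral ins_at plus_fun_apply)
  then have "tj (ins 0 a (del 0 T1)) M {#Arr r t#} x" using B(2) by (simp add: ins_del)
  from TApp[OF TApp[OF single_lam[OF this] A(3)] T2(2)]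
  have "tj (del 0 T1 + Gn + del 0 T2) (App (App (Lam M) N) P) t (Suc (Suc (x + nn) + y))" .
  moreover have "Gl = del 0 T1 + del 0 T2" using B(1) by (metis del_add del_ins)
  ultimately show ?thesis using A B(4) by (simp add: add_ac)
qed

lemma sigma3_sr: "tj G (App V (App (Lam M) N)) t n \<Longrightarrow> tj G (App (Lam (App (lift 0 V) M)) N) t n"
proof (elim tj_AppE)
  fix Gv Ga r nv na Gl Gn a nl nn
  assume A: "G = Gv + Ga" "tj Gv V {#Arr r t#} nv" "n = Suc (nv + na)" "Ga = Gl + Gn"
    "tj Gl (Lam M) {#Arr a r#} nl" "tj Gn N a nn" "na = Suc (nl + nn)"
  from lam_single_inv[OF A(5)] have 1: "tj (ins 0 a Gl) M r nl" .
  from tj_lift[OF A(2), of 0] have 2: "tj (ins 0 {#} Gv) (lift 0 V) {#Arr r t#} nv" .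
  from TApp[OF 2 1] have "tj (ins 0 a (Gv + Gl)) (App (lift 0 V) M) t (Suc (nv + nl))"
    by (simp add: ins_add[symmetric])
  from TApp[OF single_lam[OF this] A(6)] show ?thesis using A by (simp add: add_ac)
qed

lemma sigma3_se: "tj G (App (Lam (App (lift 0 V) M)) N) t n \<Longrightarrow> tj G (App V (App (Lam M) N)) t n"
proof (elim tj_AppE)
  fix Gl Gn a nl nn
  assume A: "G = Gl + Gn" "tj Gl (Lam (App (lift 0 V) M)) {#Arr a t#} nl" "tj Gn N a nn" "n = Suc (nl + nn)"
  from lam_single_inv[OF A(2)] obtain T1 T2 r x y where B: "ins 0 a Gl = T1 + T2" "tj T1 (lift 0 V) {#Arr r t#} x"
    "tj T2 M r y" "nl = Suc (x + y)" by (auto elim: tj_AppE)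
  from tj_unlift[OF B(2)] have T1: "T1 0 = {#}" "tj (del 0 T1) V {#Arr r t#} x" by auto
  have "T2 0 = a" using B(1) T1(1) by (metis add_0 ins_at plus_fun_apply)
  then have "tj (ins 0 a (del 0 T2)) M r y" using B(3) by (simp add: ins_del)
  from TApp[OF T1(2) TApp[OF single_lam[OF this] A(3)]]
  have "tj (del 0 T1 + (del 0 T2 + Gn)) (App V (App (Lam M) N)) t (Suc (x + Suc (y + nn)))" .
  moreover have "Gl = del 0 T1 + del 0 T2" using B(1) by (metis del_add del_ins)
  ultimately show ?thesis using A B(4) by (simp add: add_ac)
qed

definition tincl :: "trm \<Rightarrow> trm \<Rightarrow> bool" where
  "tincl M N \<longleftrightarrow> (\<forall>G t n. tj G M t n \<longrightarrow> (\<exists>n'. tj G N t n'))"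

lemma tincl_refl: "tincl M M" by (auto simp: tincl_def)

lemma tincl_trans: "tincl M N \<Longrightarrow> tincl N P \<Longrightarrow> tincl M P"
  unfolding tincl_def by blast

lemma tincl_lam: assumes "tincl M N" shows "tincl (Lam M) (Lam N)"
  unfolding tincl_def
proof (intro allI impI)
  fix G t n assume "tj G (Lam M) t n"
  then obtain P where P: "\<forall>p. p \<in># P \<longrightarrow> tj (ins 0 (ps p) (pG p)) M (pt p) (pn p)"
    "G = sum_mset (image_mset pG P)" "t = image_mset arr P" "n = sum_mset (image_mset pn P)"
    by (auto elim: tj_LamE)
  have "\<forall>p. \<exists>n'. p \<in># P \<longrightarrow> tj (ins 0 (ps p) (pG p)) N (pt p) n'"
    using P(1) assms unfolding tincl_def by blast
  then obtain f where f: "\<forall>p. p \<in># P \<longrightarrow> tj (ins 0 (ps p) (pG p)) N (pt p) (f p)"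
    by metis
  let ?P = "image_mset (\<lambda>p. Prem (ps p) (pG p) (pt p) (f p)) P"
  have "\<forall>p. p \<in># ?P \<longrightarrow> tj (ins 0 (ps p) (pG p)) N (pt p) (pn p)" using f by auto
  from TLam[OF this] have "tj G (Lam N) t (sum_mset (image_mset pn ?P))"
    using P by (simp add: image_mset.compositionality comp_def arr_eta)
  then show "\<exists>n'. tj G (Lam N) t n'" by blast
qed

lemma tincl_appL: "tincl M N \<Longrightarrow> tincl (App M P) (App N P)"
  unfolding tincl_def by (blast elim: tj_AppE intro: TApp)

lemma tincl_appR: "tincl M N \<Longrightarrow> tincl (App P M) (App P N)"
  unfolding tincl_def by (blast elim: tj_AppE intro: TApp)

lemma tincl_plug: "tincl M N \<Longrightarrow> tincl (plug C M) (plug C N)"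
  by (induction C) (auto intro: tincl_lam tincl_appL tincl_appR)

lemma v_rule_se: "v_rule M N \<Longrightarrow> tincl N M"
  unfolding tincl_def
  by (induction rule: v_rule.induct) (auto intro: beta_se sigma1_se sigma3_se)

lemma step_v_se: "step_v M N \<Longrightarrow> tincl N M"
  unfolding step_v_def
  by (induction rule: ctx_closure.induct) (auto intro: v_rule_se tincl_lam tincl_appL tincl_appR)

lemma red_v_se: "red_v M N \<Longrightarrow> tincl N M"
  by (induction rule: rtranclp_induct) (auto intro: tincl_refl tincl_trans step_v_se)

lemma beta_step_v: "step_beta_v M N \<Longrightarrow> step_v M N"
  unfolding step_beta_v_def step_v_def
  by (induction rule: ctx_closure.induct)
     (auto intro: ctx_closure.intros v_rule.intros elim: beta_v_rule.cases)

lemma red_beta_red_v: "red_beta_v M N \<Longrightarrow> red_v M N"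
  by (induction rule: rtranclp_induct) (auto intro: beta_step_v rtranclp.rtrancl_into_rtrancl)

lemma adequacy_complete: "red_beta_v P V \<Longrightarrow> is_value V \<Longrightarrow> \<exists>n. tj 0 P {#} n"
  using red_v_se[OF red_beta_red_v] tj_value_empty unfolding tincl_def by blast

lemma weak_progress: "tj G P t n \<Longrightarrow> G = 0 \<Longrightarrow> \<not> is_value P \<Longrightarrow>
  \<exists>P' n'. step_beta_v P P' \<and> tj 0 P' t n' \<and> n' < n"
proof (induction P arbitrary: G t n)
  case (App M N)
  from App.prems(1) obtain G1 G2 a n1 n2 where A: "G = G1 + G2" "tj G1 M {#Arr a t#} n1"
    "tj G2 N a n2" "n = Suc (n1 + n2)" by (auto elim: tj_AppE)
  have G0: "G1 = 0" "G2 = 0" using A(1) App.prems(2) zero_ctx_add by auto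
  show ?case
  proof (cases "is_value M")
    case False
    from App.IH(1)[OF A(2) G0(1) False] obtain M' n' where "step_beta_v M M'" "tj 0 M' {#Arr a t#} n'" "n' < n1"
      by auto
    then show ?thesis using TApp[of 0 M' a t n' 0 N n2] A G0
      by (intro exI[of _ "App M' N"] exI[of _ "Suc (n' + n2)"]) (auto simp: step_beta_v_def intro: ctx_closure.intros)
  next
    case vM: True
    show ?thesis
    proof (cases "is_value N")
      case False
      from App.IH(2)[OF A(3) G0(2) False] obtain N' n' where "step_beta_v N N'" "tj 0 N' a n'" "n' < n2"
        by auto
      then show ?thesis using TApp[of 0 M a t n1 0 N' n'] A G0
        by (intro exI[of _ "App M N'"] exI[of _ "Suc (n1 + n')"]) (auto simp: step_beta_v_def intro: ctx_closure.intros)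
    next
      case True
      show ?thesis
      proof (cases M)
        case (Var x)
        then have "G1 = 0(x := {#Arr a t#})" using A(2) by (auto elim: tj_VarE)
        then have False using G0(1) by (metis fun_upd_same zero_fun_apply multi_self_add_other_not_self add_0)
        then show ?thesis ..
      next
        case (Lam M')
        from beta_sr[of 0 M' N t n] A G0 Lam True obtain n' where "n' < n" "tj 0 (subst M' 0 N) t n'"
          using TApp[OF A(2) A(3)] by auto
        moreover have "step_beta_v P (subst M' 0 N)" if "P = App M N" for P
          using Lam True that by (auto simp: step_beta_v_def intro!: ctx_closure.root beta_v_rule.intros)
        ultimately show ?thesis using Lam by blast
      next
        case App then show ?thesis using vM by simp
      qed
    qed
  qed
qed auto

lemma adequacy_sound: "tj 0 P t n \<Longrightarrow> \<exists>V. is_value V \<and> red_beta_v P V"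
proof (induction n arbitrary: P rule: less_induct)
  case (less n)
  show ?case
  proof (cases "is_value P")
    case True then show ?thesis by blast
  next
    case False
    from weak_progress[OF less.prems HOL.refl False] obtain P' n' where
      "step_beta_v P P'" "tj 0 P' t n'" "n' < n" by auto
    then show ?thesis using less.IH by (meson converse_rtranclp_into_rtranclp)
  qed
qed

fun le :: "btrm \<Rightarrow> btrm \<Rightarrow> bool" where
  "le Bot t = (case t of BApp _ _ \<Rightarrow> False | _ \<Rightarrow> True)"
| "le (BVar x) t = (t = BVar x)"
| "le (BLam a) t = (case t of BLam b \<Rightarrow> le a b | _ \<Rightarrow> False)"
| "le (BApp a1 a2) t = (case t of BApp b1 b2 \<Rightarrow> le a1 b1 \<and> le a2 b2 | _ \<Rightarrow> False)"

lemma le_refl: "le a a"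
  by (induction a) auto

lemma le_trans: "le a b \<Longrightarrow> le b c \<Longrightarrow> le a c"
proof (induction a arbitrary: b c)
  case (BVar x) then show ?case by auto
next
  case (BLam a) then show ?case by (auto split: btrm.splits)
next
  case (BApp a1 a2) then show ?case by (auto split: btrm.splits)
next
  case Bot then show ?case by (cases b; cases c) auto
qed

lemma below_le: "below a b \<Longrightarrow> le a b"
  by (induction rule: below.induct) (auto intro: le_refl le_trans split: btrm.splits)

definition Fp :: "btrm \<Rightarrow> cx \<Rightarrow> tym \<Rightarrow> bool" where
  "Fp A G t \<longleftrightarrow> (\<forall>N. le A (embed N) \<longrightarrow> (\<exists>n. tj G N t n))"

lemma embed_var: "embed N = BVar x \<longleftrightarrow> N = Var x"
  by (cases N) auto

lemma Fp_botD: "Fp Bot G t \<Longrightarrow> t = {#}"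
proof -
  assume F: "Fp Bot G t"
  have "\<exists>n. tj G (Var 0) t n" "\<exists>n. tj G (Var 1) t n" using F unfolding Fp_def by auto
  then have "G = 0(0 := t)" "G = 0(1 := t)" by (auto elim: tj_VarE)
  then show ?thesis by (metis fun_upd_other fun_upd_same zero_fun_apply zero_neq_one)
qed

lemma Fp_bot: "Fp Bot 0 {#}"
  unfolding Fp_def
proof (intro allI impI)
  fix N assume "le Bot (embed N)"
  then have "is_value N" by (cases N) auto
  then show "\<exists>n. tj 0 N {#} n" using tj_value_empty by blast
qed

lemma Fp_var: "Fp (BVar x) (0(x := t)) t"
  unfolding Fp_def using TVar by (auto simp: embed_var)

lemma Fp_lam: assumes "\<forall>p. p \<in># P \<longrightarrow> Fp A (ins 0 (ps p) (pG p)) (pt p)"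
  shows "Fp (BLam A) (sum_mset (image_mset pG P)) (image_mset arr P)"
  unfolding Fp_def
proof (intro allI impI)
  fix N assume "le (BLam A) (embed N)"
  then obtain N' where N: "N = Lam N'" "le A (embed N')" by (cases N) auto
  have "\<forall>p. \<exists>n'. p \<in># P \<longrightarrow> tj (ins 0 (ps p) (pG p)) N' (pt p) n'"
    using N(2) assms unfolding Fp_def by blast
  then obtain f where f: "\<forall>p. p \<in># P \<longrightarrow> tj (ins 0 (ps p) (pG p)) N' (pt p) (f p)"
    by metis
  let ?P = "image_mset (\<lambda>p. Prem (ps p) (pG p) (pt p) (f p)) P"
  have "\<forall>p. p \<in># ?P \<longrightarrow> tj (ins 0 (ps p) (pG p)) N' (pt p) (pn p)" using f by auto
  from TLam[OF this] have "tj (sum_mset (image_mset pG P)) (Lam N') (image_mset arr P) (sum_mset (image_mset pn ?P))"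
    by (simp add: image_mset.compositionality comp_def arr_eta)
  then show "\<exists>n. tj (sum_mset (image_mset pG P)) N (image_mset arr P) n" using N by blast
qed

lemma Fp_app: "Fp A1 G1 {#Arr a t#} \<Longrightarrow> Fp A2 G2 a \<Longrightarrow> Fp (BApp A1 A2) (G1 + G2) t"
  unfolding Fp_def
proof (intro allI impI)
  fix N assume F: "\<forall>N. le A1 (embed N) \<longrightarrow> (\<exists>n. tj G1 N {#Arr a t#} n)"
    "\<forall>N. le A2 (embed N) \<longrightarrow> (\<exists>n. tj G2 N a n)" and "le (BApp A1 A2) (embed N)"
  then obtain N1 N2 where "N = App N1 N2" "le A1 (embed N1)" "le A2 (embed N2)" by (cases N) auto
  then show "\<exists>n. tj (G1 + G2) N t n" using F TApp by blast
qed

inductive_cases apxA_BLam: "apxA (BLam A)"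
inductive_cases apxB_BLam: "apxB (BLam A)"
inductive_cases apxH_BLam: "apxH (BLam A)"
inductive_cases apxA_BApp: "apxA (BApp A1 A2)"
inductive_cases apxB_BApp: "apxB (BApp A1 A2)"

lemma apx_var: "le A (embed (Var x)) \<Longrightarrow> A = BVar x \<or> A = Bot"
  by (cases A) auto

lemma apx_lam: "apxA A \<Longrightarrow> le A (embed (Lam M)) \<Longrightarrow> A = Bot \<or> (\<exists>A'. A = BLam A' \<and> apxA A' \<and> le A' (embed M))"
  by (cases A) (auto elim: apxA_BLam apxB_BLam apxH_BLam)

lemma apx_value_B: "is_value M \<Longrightarrow> apxA A \<Longrightarrow> le A (embed M) \<Longrightarrow> apxB A"
  by (cases M; cases A) (auto intro: apxA_apxB_apxH.intros elim: apxA_BLam apxB_BLam apxH_BLam)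

lemma apx_app_H: "apxA A \<Longrightarrow> le A (embed (App M1 M2)) \<Longrightarrow> (\<forall>P. M1 \<noteq> Lam P) \<Longrightarrow> apxH A"
proof -
  assume a: "apxA A" "le A (embed (App M1 M2))" "\<forall>P. M1 \<noteq> Lam P"
  obtain A1 A2 where A: "A = BApp A1 A2" "le A1 (embed M1)" using a(2) by (cases A) simp_all
  show ?thesis unfolding A(1) using a(1)[unfolded A(1)] A(2) a(3)
    by (cases M1) (auto elim: apxA_BApp apxB_BApp)
qed


datatype jdg = J (jc: cx) (jt: tym) (jn: nat)

fun sz :: "trm \<Rightarrow> nat" where
  "sz (Var x) = 2"
| "sz (Lam M) = Suc (sz M)"
| "sz (App M N) = sz M * sz N"

lemma sz_ge2: "sz M \<ge> 2"
proof (induction M)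
  case (App M N) then show ?case by simp (metis mult_le_mono one_le_numeral order_trans mult_1 numeral_le_one_iff semiring_norm(69) le_numeral_extra(4))
qed auto

lemma sz_lift[simp]: "sz (lift k M) = sz M"
  by (induction M arbitrary: k) auto

lemma sz_sigma1: "sz (App (Lam (App M (lift 0 P))) N) < sz (App (App (Lam M) N) P)"
proof -
  have "sz N * 1 < sz N * sz P" using sz_ge2[of N] sz_ge2[of P] by (intro mult_strict_left_mono) auto
  then show ?thesis by (simp add: algebra_simps)
qed

lemma sz_sigma3: "sz (App (Lam (App (lift 0 V) M)) N) < sz (App V (App (Lam M) N))"
proof -
  have "sz N * 1 < sz N * sz V" using sz_ge2[of N] sz_ge2[of V] by (intro mult_strict_left_mono) auto
  then show ?thesis by (simp add: algebra_simps)
qed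

definition typs :: "jdg multiset \<Rightarrow> trm \<Rightarrow> bool" where
  "typs Q M \<longleftrightarrow> (\<forall>q. q \<in># Q \<longrightarrow> tj (jc q) M (jt q) (jn q))"

definition tot :: "jdg multiset \<Rightarrow> nat" where
  "tot Q = sum_mset (image_mset jn Q)"

definition Nrm :: "jdg multiset \<Rightarrow> trm \<Rightarrow> bool" where
  "Nrm Q M \<longleftrightarrow> (\<exists>A. apxA A \<and> below A (embed M) \<and> (\<forall>q. q \<in># Q \<longrightarrow> Fp A (jc q) (jt q)))"

definition Stp :: "jdg multiset \<Rightarrow> trm \<Rightarrow> bool" where
  "Stp Q M \<longleftrightarrow> (\<exists>M' f. step_v M M' \<and> (\<forall>q. q \<in># Q \<longrightarrow> tj (jc q) M' (jt q) (f q)) \<and>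
     sum_mset (image_mset f Q) \<le> tot Q \<and> (sum_mset (image_mset f Q) < tot Q \<or> sz M' < sz M))"

lemma sum_mset_le: "(\<forall>q. q \<in># Q \<longrightarrow> (f q::nat) \<le> g q) \<Longrightarrow> sum_mset (image_mset f Q) \<le> sum_mset (image_mset g Q)"
  by (induction Q) (auto intro: add_mono)

lemma sum_mset_less: "Q \<noteq> {#} \<Longrightarrow> (\<forall>q. q \<in># Q \<longrightarrow> (f q::nat) < g q) \<Longrightarrow> sum_mset (image_mset f Q) < sum_mset (image_mset g Q)"
proof (induction Q)
  case (add x Q)
  then show ?case
    by (cases "Q = {#}") (auto intro: add_less_le_mono sum_mset_le less_imp_le)
qed simp

lemma mem_sum_mset: "x \<in># sum_mset (image_mset F Q) \<longleftrightarrow> (\<exists>q. q \<in># Q \<and> x \<in># F q)"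
  by (induction Q) auto

lemma sum_image_sum: "sum_mset (image_mset f (sum_mset (image_mset F Q))) = sum_mset (image_mset (\<lambda>q. sum_mset (image_mset f (F q))) Q)"
  by (induction Q) auto

lemma sum_Suc_add: "sum_mset (image_mset (\<lambda>q. Suc (a q + b q)) Q) = sum_mset (image_mset a Q) + sum_mset (image_mset b Q) + size Q"
  by (induction Q) auto

lemma step_v_root: "v_rule M M' \<Longrightarrow> step_v M M'"
  unfolding step_v_def by (rule ctx_closure.root)

lemma Stp_strict: "step_v M M' \<Longrightarrow> Q \<noteq> {#} \<Longrightarrow> (\<forall>q. q \<in># Q \<longrightarrow> (\<exists>n'. tj (jc q) M' (jt q) n' \<and> n' < jn q)) \<Longrightarrow> Stp Q M"
proof -
  assume a: "step_v M M'" "Q \<noteq> {#}" "\<forall>q. q \<in># Q \<longrightarrow> (\<exists>n'. tj (jc q) M' (jt q) n' \<and> n' < jn q)"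
  then have "\<forall>q. \<exists>n'. q \<in># Q \<longrightarrow> tj (jc q) M' (jt q) n' \<and> n' < jn q" by blast
  then obtain f where f: "\<forall>q. q \<in># Q \<longrightarrow> tj (jc q) M' (jt q) (f q) \<and> f q < jn q" by metis
  have "sum_mset (image_mset f Q) < tot Q" unfolding tot_def using sum_mset_less[OF a(2)] f by blast
  then show ?thesis unfolding Stp_def using a(1) f by (intro exI[of _ M'] exI[of _ f]) auto
qed

lemma Stp_eq: "step_v M M' \<Longrightarrow> sz M' < sz M \<Longrightarrow> (\<forall>q. q \<in># Q \<longrightarrow> tj (jc q) M' (jt q) (jn q)) \<Longrightarrow> Stp Q M"
  unfolding Stp_def tot_def by (intro exI[of _ M'] exI[of _ jn]) auto

lemma apxA_bot: "apxA Bot" by (rule A_B[OF B_bot])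

lemma below_app: "below A1 B1 \<Longrightarrow> below A2 B2 \<Longrightarrow> below (BApp A1 A2) (BApp B1 B2)"
  by (meson below.appL below.appR below.trans)

lemma Fp_nonbot: "Fp A G {#Arr a b#} \<Longrightarrow> A \<noteq> Bot"
  using Fp_botD by fastforce

lemma progress: "typs Q M \<Longrightarrow> Q \<noteq> {#} \<Longrightarrow> Nrm Q M \<or> Stp Q M"
proof (induction M arbitrary: Q)
  case (Var x)
  have "\<forall>q. q \<in># Q \<longrightarrow> Fp (BVar x) (jc q) (jt q)"
  proof (intro allI impI)
    fix q assume "q \<in># Q"
    then have "tj (jc q) (Var x) (jt q) (jn q)" using Var.prems(1) unfolding typs_def by blast
    then have "jc q = 0(x := jt q)" by (auto elim: tj_VarE)
    then show "Fp (BVar x) (jc q) (jt q)" using Fp_var by simp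
  qed
  moreover have "apxA (BVar x)" by (rule A_B[OF B_var])
  moreover have "below (BVar x) (embed (Var x))" by (simp add: below.refl)
  ultimately show ?case unfolding Nrm_def by blast
next
  case (Lam M)
  have "\<forall>q. \<exists>P. q \<in># Q \<longrightarrow> ((\<forall>p. p \<in># P \<longrightarrow> tj (ins 0 (ps p) (pG p)) M (pt p) (pn p)) \<and>
     jc q = sum_mset (image_mset pG P) \<and> jt q = image_mset arr P \<and> jn q = sum_mset (image_mset pn P))"
  proof
    fix q show "\<exists>P. q \<in># Q \<longrightarrow> ((\<forall>p. p \<in># P \<longrightarrow> tj (ins 0 (ps p) (pG p)) M (pt p) (pn p)) \<and>
     jc q = sum_mset (image_mset pG P) \<and> jt q = image_mset arr P \<and> jn q = sum_mset (image_mset pn P))"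
    proof (cases "q \<in># Q")
      case True
      then have "tj (jc q) (Lam M) (jt q) (jn q)" using Lam.prems(1) unfolding typs_def by blast
      then show ?thesis by (elim tj_LamE) blast
    qed simp
  qed
  from choice[OF this] obtain Pf where Pf0: "\<forall>q. q \<in># Q \<longrightarrow> ((\<forall>p. p \<in># Pf q \<longrightarrow> tj (ins 0 (ps p) (pG p)) M (pt p) (pn p)) \<and>
     jc q = sum_mset (image_mset pG (Pf q)) \<and> jt q = image_mset arr (Pf q) \<and> jn q = sum_mset (image_mset pn (Pf q)))"
    by blast
  have Pf: "\<And>q. q \<in># Q \<Longrightarrow> (\<forall>p. p \<in># Pf q \<longrightarrow> tj (ins 0 (ps p) (pG p)) M (pt p) (pn p)) \<and>
     jc q = sum_mset (image_mset pG (Pf q)) \<and> jt q = image_mset arr (Pf q) \<and> jn q = sum_mset (image_mset pn (Pf q))"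
    using Pf0 by blast
  define bt where "bt p = J (ins 0 (ps p) (pG p)) (pt p) (pn p)" for p
  define Qb where "Qb = sum_mset (image_mset (\<lambda>q. image_mset bt (Pf q)) Q)"
  have memQb: "b \<in># Qb \<longleftrightarrow> (\<exists>q p. q \<in># Q \<and> p \<in># Pf q \<and> b = bt p)" for b
    unfolding Qb_def mem_sum_mset by auto
  have tQb: "typs Qb M" unfolding typs_def memQb using Pf by (auto simp: bt_def)
  show ?case
  proof (cases "Qb = {#}")
    case True
    have "Pf q = {#}" if q: "q \<in># Q" for q
    proof (rule ccontr)
      assume "Pf q \<noteq> {#}"
      then obtain p where "p \<in># Pf q" by blast
      then have "bt p \<in># Qb" using memQb q by blast
      with True show False by simp
    qed
    then have "\<forall>q. q \<in># Q \<longrightarrow> jc q = 0 \<and> jt q = {#}" using Pf by auto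
    moreover have "below Bot (embed (Lam M))" by (simp add: below.bot_lam)
    ultimately have "Nrm Q (Lam M)" unfolding Nrm_def using apxA_bot Fp_bot by metis
    then show ?thesis ..
  next
    case False
    from Lam.IH[OF tQb False] show ?thesis
    proof
      assume "Nrm Qb M"
      then obtain A where A: "apxA A" "below A (embed M)" "\<forall>b. b \<in># Qb \<longrightarrow> Fp A (jc b) (jt b)"
        unfolding Nrm_def by blast
      have "apxA (BLam A)" using A(1) by (rule A_B[OF B_lam])
      moreover have "below (BLam A) (embed (Lam M))" using A(2) by (simp add: below.lam)
      moreover have "Fp (BLam A) (jc q) (jt q)" if q: "q \<in># Q" for q
      proof -
        have "\<forall>p. p \<in># Pf q \<longrightarrow> Fp A (ins 0 (ps p) (pG p)) (pt p)"
        proof (intro allI impI)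
          fix p assume "p \<in># Pf q"
          then have "bt p \<in># Qb" using memQb q by blast
          then show "Fp A (ins 0 (ps p) (pG p)) (pt p)" using A(3) unfolding bt_def by force
        qed
        from Fp_lam[OF this] show ?thesis using Pf[OF q] by simp
      qed
      ultimately show ?thesis unfolding Nrm_def by blast
    next
      assume "Stp Qb M"
      then obtain M' f where S: "step_v M M'" "\<forall>b. b \<in># Qb \<longrightarrow> tj (jc b) M' (jt b) (f b)"
        "sum_mset (image_mset f Qb) \<le> tot Qb" "sum_mset (image_mset f Qb) < tot Qb \<or> sz M' < sz M"
        unfolding Stp_def by blast
      define g where "g q = sum_mset (image_mset (\<lambda>p. f (bt p)) (Pf q))" for q
      have tg: "tj (jc q) (Lam M') (jt q) (g q)" if q: "q \<in># Q" for q
      proof -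
        let ?P = "image_mset (\<lambda>p. Prem (ps p) (pG p) (pt p) (f (bt p))) (Pf q)"
        have "\<forall>p. p \<in># ?P \<longrightarrow> tj (ins 0 (ps p) (pG p)) M' (pt p) (pn p)"
        proof (intro allI impI)
          fix p' assume "p' \<in># ?P"
          then obtain p where p: "p \<in># Pf q" "p' = Prem (ps p) (pG p) (pt p) (f (bt p))" by auto
          then have "bt p \<in># Qb" using memQb q by blast
          then show "tj (ins 0 (ps p') (pG p')) M' (pt p') (pn p')" using S(2) p(2) unfolding bt_def by force
        qed
        from TLam[OF this] show ?thesis using Pf[OF q]
          by (simp add: image_mset.compositionality comp_def arr_eta g_def)
      qed
      have e1: "sum_mset (image_mset g Q) = sum_mset (image_mset f Qb)"
        unfolding Qb_def sum_image_sum g_def by (simp add: image_mset.compositionality comp_def)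
      have "sum_mset (image_mset jn Qb) = sum_mset (image_mset (\<lambda>q. sum_mset (image_mset pn (Pf q))) Q)"
        unfolding Qb_def sum_image_sum by (simp add: image_mset.compositionality comp_def bt_def)
      also have "\<dots> = tot Q" unfolding tot_def using Pf by (intro arg_cong[where f=sum_mset] image_mset_cong) auto
      finally have e2: "tot Qb = tot Q" unfolding tot_def .
      have "step_v (Lam M) (Lam M')" using S(1) unfolding step_v_def by (rule ctx_closure.lam)
      then show ?thesis unfolding Stp_def using tg e1 e2 S(3,4)
        by (intro disjI2 exI[of _ "Lam M'"] exI[of _ g]) auto
    qed
  qed
next
  case (App M1 M2)
  have "\<forall>q. \<exists>j. q \<in># Q \<longrightarrow> (jc q = jc (fst j) + jc (snd j) \<and> jt (fst j) = {#Arr (jt (snd j)) (jt q)#} \<and>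
      jn q = Suc (jn (fst j) + jn (snd j)) \<and> tj (jc (fst j)) M1 (jt (fst j)) (jn (fst j)) \<and>
      tj (jc (snd j)) M2 (jt (snd j)) (jn (snd j)))"
  proof (intro allI)
    fix q show "\<exists>j. q \<in># Q \<longrightarrow> (jc q = jc (fst j) + jc (snd j) \<and> jt (fst j) = {#Arr (jt (snd j)) (jt q)#} \<and>
      jn q = Suc (jn (fst j) + jn (snd j)) \<and> tj (jc (fst j)) M1 (jt (fst j)) (jn (fst j)) \<and>
      tj (jc (snd j)) M2 (jt (snd j)) (jn (snd j)))"
    proof (cases "q \<in># Q")
      case True
      then have "tj (jc q) (App M1 M2) (jt q) (jn q)" using App.prems(1) unfolding typs_def by blast
      then obtain G1 G2 a n1 n2 where "jc q = G1 + G2" "tj G1 M1 {#Arr a (jt q)#} n1" "tj G2 M2 a n2"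
        "jn q = Suc (n1 + n2)" by (auto elim: tj_AppE)
      then show ?thesis by (intro exI[of _ "(J G1 {#Arr a (jt q)#} n1, J G2 a n2)"]) auto
    qed simp
  qed
  from choice[OF this] obtain F where F0: "\<forall>q. q \<in># Q \<longrightarrow> (jc q = jc (fst (F q)) + jc (snd (F q)) \<and> jt (fst (F q)) = {#Arr (jt (snd (F q))) (jt q)#} \<and>
      jn q = Suc (jn (fst (F q)) + jn (snd (F q))) \<and> tj (jc (fst (F q))) M1 (jt (fst (F q))) (jn (fst (F q))) \<and>
      tj (jc (snd (F q))) M2 (jt (snd (F q))) (jn (snd (F q))))" by blast
  have F: "\<And>q. q \<in># Q \<Longrightarrow> jc q = jc (fst (F q)) + jc (snd (F q)) \<and> jt (fst (F q)) = {#Arr (jt (snd (F q))) (jt q)#} \<and>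
      jn q = Suc (jn (fst (F q)) + jn (snd (F q))) \<and> tj (jc (fst (F q))) M1 (jt (fst (F q))) (jn (fst (F q))) \<and>
      tj (jc (snd (F q))) M2 (jt (snd (F q))) (jn (snd (F q)))"
    using F0 by blast
  define Q1 where "Q1 = image_mset (fst \<circ> F) Q"
  define Q2 where "Q2 = image_mset (snd \<circ> F) Q"
  have tQ1: "typs Q1 M1" unfolding typs_def Q1_def using F by auto
  have tQ2: "typs Q2 M2" unfolding typs_def Q2_def using F by auto
  have ne: "Q1 \<noteq> {#}" "Q2 \<noteq> {#}" unfolding Q1_def Q2_def using App.prems(2) by auto
  have totQ: "tot Q = tot Q1 + tot Q2 + size Q"
  proof -
    have "tot Q = sum_mset (image_mset (\<lambda>q. Suc (jn (fst (F q)) + jn (snd (F q)))) Q)"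
      unfolding tot_def using F by (intro arg_cong[where f=sum_mset] image_mset_cong) auto
    then show ?thesis unfolding sum_Suc_add tot_def Q1_def Q2_def by (simp add: image_mset.compositionality comp_def)
  qed
  from App.IH(1)[OF tQ1 ne(1)] show ?case
  proof
    assume "Stp Q1 M1"
    then obtain M' f where S: "step_v M1 M'" "\<forall>b. b \<in># Q1 \<longrightarrow> tj (jc b) M' (jt b) (f b)"
      "sum_mset (image_mset f Q1) \<le> tot Q1" "sum_mset (image_mset f Q1) < tot Q1 \<or> sz M' < sz M1"
      unfolding Stp_def by blast
    define g where "g q = Suc (f (fst (F q)) + jn (snd (F q)))" for q
    have tg: "tj (jc q) (App M' M2) (jt q) (g q)" if q: "q \<in># Q" for q
    proof -
      have "tj (jc (fst (F q))) M' {#Arr (jt (snd (F q))) (jt q)#} (f (fst (F q)))"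
        using S(2) F[OF q] q unfolding Q1_def by force
      from TApp[OF this] F[OF q] show ?thesis unfolding g_def by metis
    qed
    have e: "sum_mset (image_mset g Q) = sum_mset (image_mset f Q1) + tot Q2 + size Q"
      unfolding g_def sum_Suc_add tot_def Q1_def Q2_def by (simp add: image_mset.compositionality comp_def)
    have sz: "sz M' < sz M1 \<Longrightarrow> sz (App M' M2) < sz (App M1 M2)"
      using sz_ge2[of M2] by simp
    have "step_v (App M1 M2) (App M' M2)" using S(1) unfolding step_v_def by (rule ctx_closure.appL)
    then show ?thesis unfolding Stp_def using tg e totQ S(3,4) sz
      by (intro disjI2 exI[of _ "App M' M2"] exI[of _ g]) auto
  next
    assume N1: "Nrm Q1 M1"
    from App.IH(2)[OF tQ2 ne(2)] show ?case
    proof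
      assume "Stp Q2 M2"
      then obtain M' f where S: "step_v M2 M'" "\<forall>b. b \<in># Q2 \<longrightarrow> tj (jc b) M' (jt b) (f b)"
        "sum_mset (image_mset f Q2) \<le> tot Q2" "sum_mset (image_mset f Q2) < tot Q2 \<or> sz M' < sz M2"
        unfolding Stp_def by blast
      define g where "g q = Suc (jn (fst (F q)) + f (snd (F q)))" for q
      have tg: "tj (jc q) (App M1 M') (jt q) (g q)" if q: "q \<in># Q" for q
      proof -
        have "tj (jc (snd (F q))) M' (jt (snd (F q))) (f (snd (F q)))"
          using S(2) q unfolding Q2_def by force
        from TApp[OF _ this] F[OF q] show ?thesis unfolding g_def by metis
      qed
      have e: "sum_mset (image_mset g Q) = tot Q1 + sum_mset (image_mset f Q2) + size Q"
        unfolding g_def sum_Suc_add tot_def Q1_def Q2_def by (simp add: image_mset.compositionality comp_def)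
      have sz: "sz M' < sz M2 \<Longrightarrow> sz (App M1 M') < sz (App M1 M2)"
        using sz_ge2[of M1] by simp
      have "step_v (App M1 M2) (App M1 M')" using S(1) unfolding step_v_def by (rule ctx_closure.appR)
      then show ?thesis unfolding Stp_def using tg e totQ S(3,4) sz
        by (intro disjI2 exI[of _ "App M1 M'"] exI[of _ g]) auto
    next
      assume N2: "Nrm Q2 M2"
      from N1 obtain A1 where A1: "apxA A1" "below A1 (embed M1)" "\<forall>b. b \<in># Q1 \<longrightarrow> Fp A1 (jc b) (jt b)"
        unfolding Nrm_def by blast
      from N2 obtain A2 where A2: "apxA A2" "below A2 (embed M2)" "\<forall>b. b \<in># Q2 \<longrightarrow> Fp A2 (jc b) (jt b)"
        unfolding Nrm_def by blast
      have A1nb: "A1 \<noteq> Bot"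
      proof -
        obtain q where q: "q \<in># Q" using App.prems(2) by blast
        then have "Fp A1 (jc (fst (F q))) {#Arr (jt (snd (F q))) (jt q)#}" using A1(3) F[OF q] unfolding Q1_def by force
        then show ?thesis by (rule Fp_nonbot)
      qed
      have fin: "apxA (BApp A1 A2) \<Longrightarrow> Nrm Q (App M1 M2)"
      proof -
        assume ap: "apxA (BApp A1 A2)"
        have "Fp (BApp A1 A2) (jc q) (jt q)" if q: "q \<in># Q" for q
        proof -
          have "Fp A1 (jc (fst (F q))) {#Arr (jt (snd (F q))) (jt q)#}" using A1(3) F[OF q] q unfolding Q1_def by force
          moreover have "Fp A2 (jc (snd (F q))) (jt (snd (F q)))" using A2(3) q unfolding Q2_def by force
          ultimately show ?thesis using Fp_app F[OF q] by metis
        qed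
        then show ?thesis unfolding Nrm_def using ap below_app[OF A1(2) A2(2)] by (intro exI[of _ "BApp A1 A2"]) auto
      qed
      have sig3: "Stp Q (App M1 M2)" if "is_value M1" "M2 = App (Lam P) R" for P R
      proof (rule Stp_eq)
        show "step_v (App M1 M2) (App (Lam (App (lift 0 M1) P)) R)" using that by (auto intro: step_v_root v_rule.sigma3)
        show "sz (App (Lam (App (lift 0 M1) P)) R) < sz (App M1 M2)" using that sz_sigma3 by simp
        show "\<forall>q. q \<in># Q \<longrightarrow> tj (jc q) (App (Lam (App (lift 0 M1) P)) R) (jt q) (jn q)"
          using App.prems(1) that sigma3_sr unfolding typs_def by blast
      qed
      have B2: "apxB A2" if h1: "\<forall>P R. M2 \<noteq> App (Lam P) R"
      proof (cases "is_value M2")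
        case True then show ?thesis using apx_value_B A2 below_le by blast
      next
        case False
        then obtain M21 M22 where "M2 = App M21 M22" by (cases M2) auto
        then have "apxH A2" using apx_app_H[OF A2(1)] A2(2) below_le h1 by blast
        then show ?thesis by (rule B_head)
      qed
      have H2: "apxH A2" if h1: "\<forall>P R. M2 \<noteq> App (Lam P) R" and h2: "\<not> is_value M2"
      proof -
        obtain M21 M22 where "M2 = App M21 M22" using h2 by (cases M2) auto
        then show ?thesis using apx_app_H[OF A2(1)] A2(2) below_le h1 by blast
      qed
      show ?case
      proof (cases M1)
        case (Var x)
        show ?thesis
        proof (cases "\<exists>P R. M2 = App (Lam P) R")
          case True then show ?thesis using sig3 Var by auto
        next
          case False
          have "A1 = BVar x" using apx_var[of A1 x] A1(2) below_le Var A1nb by blast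
          then have "apxA (BApp A1 A2)" using B2 False by (auto intro: A_B[OF B_head[OF H_base]])
          then show ?thesis using fin by blast
        qed
      next
        case (Lam P)
        show ?thesis
        proof (cases "is_value M2")
          case True
          have "Stp Q (App M1 M2)"
          proof (rule Stp_strict)
            show "step_v (App M1 M2) (subst P 0 M2)" using Lam True by (auto intro: step_v_root v_rule.beta_v)
            show "Q \<noteq> {#}" by fact
            show "\<forall>q. q \<in># Q \<longrightarrow> (\<exists>n'. tj (jc q) (subst P 0 M2) (jt q) n' \<and> n' < jn q)"
              using App.prems(1) Lam True beta_sr unfolding typs_def by blast
          qed
          then show ?thesis ..
        next
          case nv: False
          show ?thesis
          proof (cases "\<exists>P R. M2 = App (Lam P) R")
            case True then show ?thesis using sig3 Lam by auto
          next
            case False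
            obtain A' where "A1 = BLam A'" "apxA A'" using apx_lam[OF A1(1)] A1(2) below_le Lam A1nb by blast
            then have "apxA (BApp A1 A2)" using H2 False nv by (auto intro: A_C)
            then show ?thesis using fin by blast
          qed
        qed
      next
        case (App M11 M12)
        show ?thesis
        proof (cases "\<exists>P. M11 = Lam P")
          case True
          then obtain P where P: "M11 = Lam P" by blast
          have "Stp Q (App M1 M2)"
          proof (rule Stp_eq)
            show "step_v (App M1 M2) (App (Lam (App P (lift 0 M2))) M12)" using App P by (auto intro: step_v_root v_rule.sigma1)
            show "sz (App (Lam (App P (lift 0 M2))) M12) < sz (App M1 M2)" using App P sz_sigma1 by simp
            show "\<forall>q. q \<in># Q \<longrightarrow> tj (jc q) (App (Lam (App P (lift 0 M2))) M12) (jt q) (jn q)"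
              using App.prems(1) App P sigma1_sr unfolding typs_def by blast
          qed
          then show ?thesis ..
        next
          case False
          have "apxH A1" using apx_app_H[OF A1(1)] A1(2) below_le App False by blast
          then have "apxA (BApp A1 A2)" using A2(1) by (rule A_B[OF B_head[OF H_app]])
          then show ?thesis using fin by blast
        qed
      qed
    qed
  qed
qed

definition NormP :: "jdg multiset \<Rightarrow> trm \<Rightarrow> bool" where
  "NormP Q M \<longleftrightarrow> (typs Q M \<longrightarrow> Q \<noteq> {#} \<longrightarrow>
     (\<exists>M' A. red_v M M' \<and> apxA A \<and> below A (embed M') \<and> (\<forall>q. q \<in># Q \<longrightarrow> Fp A (jc q) (jt q))))"

lemma normalize_aux: "\<forall>Q M. (tot Q, sz M) = x \<longrightarrow> NormP Q M"
proof (induction x rule: wf_induct[OF wf_lex_prod[OF wf_less_than wf_less_than]])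
  case (1 x)
  show ?case
  proof (intro allI impI)
    fix Q M assume x: "(tot Q, sz M) = x"
    show "NormP Q M" unfolding NormP_def
    proof (intro impI)
      assume t: "typs Q M" and ne: "Q \<noteq> {#}"
      from progress[OF t ne] show "\<exists>M' A. red_v M M' \<and> apxA A \<and> below A (embed M') \<and> (\<forall>q. q \<in># Q \<longrightarrow> Fp A (jc q) (jt q))"
      proof
        assume "Nrm Q M"
        then show ?thesis unfolding Nrm_def by blast
      next
        assume "Stp Q M"
        then obtain M' f where S: "step_v M M'" "\<forall>q. q \<in># Q \<longrightarrow> tj (jc q) M' (jt q) (f q)"
          "sum_mset (image_mset f Q) \<le> tot Q" "sum_mset (image_mset f Q) < tot Q \<or> sz M' < sz M"
          unfolding Stp_def by blast
        define Q' where "Q' = image_mset (\<lambda>q. J (jc q) (jt q) (f q)) Q"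
        have tQ': "typs Q' M'" unfolding typs_def Q'_def using S(2) by auto
        have neQ': "Q' \<noteq> {#}" unfolding Q'_def using ne by simp
        have tot': "tot Q' = sum_mset (image_mset f Q)" unfolding tot_def Q'_def
          by (simp add: image_mset.compositionality comp_def)
        have "((tot Q', sz M'), x) \<in> less_than <*lex*> less_than"
          using x S(3,4) tot' by auto
        with 1 have "NormP Q' M'" by blast
        then obtain M'' A where R: "red_v M' M''" "apxA A" "below A (embed M'')"
          "\<forall>q. q \<in># Q' \<longrightarrow> Fp A (jc q) (jt q)"
          unfolding NormP_def using tQ' neQ' by blast
        have "red_v M M''" using S(1) R(1) by (rule converse_rtranclp_into_rtranclp)
        moreover have "\<forall>q. q \<in># Q \<longrightarrow> Fp A (jc q) (jt q)"
        proof (intro allI impI)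
          fix q assume "q \<in># Q"
          then have "J (jc q) (jt q) (f q) \<in># Q'" unfolding Q'_def by simp
          then show "Fp A (jc q) (jt q)" using R(4) by force
        qed
        ultimately show ?thesis using R(2,3) by blast
      qed
    qed
  qed
qed

lemma normalize: "tj G M t n \<Longrightarrow> \<exists>M' A. red_v M M' \<and> apxA A \<and> below A (embed M') \<and> Fp A G t"
proof -
  assume "tj G M t n"
  then have "typs {#J G t n#} M" unfolding typs_def by simp
  with normalize_aux[of "(tot {#J G t n#}, sz M)"] show ?thesis unfolding NormP_def by force
qed

lemma tincl_approx: "approximants M \<subseteq> approximants N \<Longrightarrow> tincl M N"
  unfolding tincl_def
proof (intro allI impI)
  fix G t n assume sub: "approximants M \<subseteq> approximants N" and "tj G M t n"
  from normalize[OF this(2)] obtain M' A where A: "red_v M M'" "apxA A" "below A (embed M')" "Fp A G t" by blast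
  then have "A \<in> approximants M" unfolding approximants_def by blast
  with sub have "A \<in> approximants N" by blast
  then obtain N' where N': "red_v N N'" "below A (embed N')" unfolding approximants_def by blast
  from A(4) below_le[OF N'(2)] obtain n' where "tj G N' t n'" unfolding Fp_def by blast
  with red_v_se[OF N'(1)] show "\<exists>n'. tj G N t n'" unfolding tincl_def by blast
qed

lemma obs_half: "tincl M N \<Longrightarrow> (\<exists>V. is_value V \<and> red_beta_v (plug C M) V) \<Longrightarrow> (\<exists>U. is_value U \<and> red_beta_v (plug C N) U)"
proof -
  assume t: "tincl M N" and "\<exists>V. is_value V \<and> red_beta_v (plug C M) V"
  then obtain V where "is_value V" "red_beta_v (plug C M) V" by blast
  from adequacy_complete[OF this(2,1)] obtain n where "tj 0 (plug C M) {#} n" by blast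
  with tincl_plug[OF t, of C] obtain n' where "tj 0 (plug C N) {#} n'" unfolding tincl_def by blast
  then show ?thesis by (rule adequacy_sound)
qed

theorem theorem4p16:
  fixes M N :: trm
  assumes "BT M = BT N"
  shows "obs_equiv M N"
proof -
  have "tincl M N" "tincl N M" using assms tincl_approx unfolding BT_def by auto
  then show ?thesis unfolding obs_equiv_def using obs_half by blast
qed

end
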